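(* Let $B$ be a locally compact Hausdorff space, let $(X,r)$ be a $B$-space, let $(X',r')$ be a $B$-space with $X'$ Hausdorff and $r'$ proper, let $f\colon X\to X'$ be a $B$-map, and let $f'\colon\beta_BX\to X'$ be the unique continuous map with $f'\circ i=f$. Then $r'\circ f'=\beta_Br$.
   Context: A $B$-space is a space $Z$ with continuous $r\colon Z\to B$; a $B$-map is a continuous map commuting with the anchor maps. For a $B$-space $(X,r)$, $H_X\subseteq\mathrm{C_b}(X)$ is the closed linear span of products $g\cdot(h\circ r)$, $g\in\mathrm{C_b}(X)$, $h\in\mathrm C_0(B)$; $\beta_BX$ is the spectrum of the commutative C*-algebra $H_X$; $i\colon X\to\beta_BX$ sends $x$ to evaluation at $x$; $\beta_Br\colon\beta_BX\to B$ is the unique continuous map with $\beta_Br\circ i=r$ (it exists and is proper). The map $f'$ exists and is unique. *)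

theory Defs
  imports "HOL-Analysis.Analysis"
begin

text \<open>Complex-valued functions on a space X are represented as total functions
  that vanish outside topspace X (so that distinct elements of C_b(X) are distinct HOL functions).\<close>

definition Cb :: "'a topology \<Rightarrow> ('a \<Rightarrow> complex) set" where
  "Cb X = {g. continuous_map X euclidean g \<and> bounded (g ` topspace X)
              \<and> (\<forall>x. x \<notin> topspace X \<longrightarrow> g x = 0)}"

definition C0 :: "'b topology \<Rightarrow> ('b \<Rightarrow> complex) set" where
  "C0 B = {h. continuous_map B euclidean h
              \<and> (\<forall>e>0. \<exists>K. compactin B K \<and> (\<forall>y\<in>topspace B - K. norm (h y) < e))
              \<and> (\<forall>y. y \<notin> topspace B \<longrightarrow> h y = 0)}"

text \<open>Linear span of the products g * (h o r); scalars are absorbed into g \<in> C_b(X).\<close>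
definition HX_span :: "'b topology \<Rightarrow> 'a topology \<Rightarrow> ('a \<Rightarrow> 'b) \<Rightarrow> ('a \<Rightarrow> complex) set" where
  "HX_span B X r = {p. \<exists>(n::nat) g h. (\<forall>i<n. g i \<in> Cb X \<and> h i \<in> C0 B)
                          \<and> p = (\<lambda>x. \<Sum>i<n. g i x * h i (r x)) }"

definition HX :: "'b topology \<Rightarrow> 'a topology \<Rightarrow> ('a \<Rightarrow> 'b) \<Rightarrow> ('a \<Rightarrow> complex) set" where
  "HX B X r = {g \<in> Cb X. \<forall>e>0. \<exists>p\<in>HX_span B X r. \<forall>x\<in>topspace X. norm (g x - p x) < e}"

definition characters :: "('a \<Rightarrow> complex) set \<Rightarrow> (('a \<Rightarrow> complex) \<Rightarrow> complex) set" where
  "characters H = {\<phi>. \<phi> \<in> extensional H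
     \<and> (\<forall>g\<in>H. \<forall>h\<in>H. \<phi> (\<lambda>x. g x + h x) = \<phi> g + \<phi> h)
     \<and> (\<forall>g\<in>H. \<forall>c. \<phi> (\<lambda>x. c * g x) = c * \<phi> g)
     \<and> (\<forall>g\<in>H. \<forall>h\<in>H. \<phi> (\<lambda>x. g x * h x) = \<phi> g * \<phi> h)
     \<and> (\<exists>g\<in>H. \<phi> g \<noteq> 0)}"

definition betaB :: "'b topology \<Rightarrow> 'a topology \<Rightarrow> ('a \<Rightarrow> 'b)
                     \<Rightarrow> (('a \<Rightarrow> complex) \<Rightarrow> complex) topology" where
  "betaB B X r = subtopology (product_topology (\<lambda>_. euclidean) (HX B X r)) (characters (HX B X r))"

definition beta_i :: "'b topology \<Rightarrow> 'a topology \<Rightarrow> ('a \<Rightarrow> 'b) \<Rightarrow> 'a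
                      \<Rightarrow> (('a \<Rightarrow> complex) \<Rightarrow> complex)" where
  "beta_i B X r x = restrict (\<lambda>g. g x) (HX B X r)"

end

theory Submission
  imports Defs
begin

lemma cm_mult:
  fixes f g :: "'a \<Rightarrow> complex"
  shows "\<lbrakk>continuous_map X euclidean f; continuous_map X euclidean g\<rbrakk> \<Longrightarrow> continuous_map X euclidean (\<lambda>x. f x * g x)"
  by (simp add: continuous_map_atin tendsto_mult)

lemma cm_cnj:
  fixes f :: "'a \<Rightarrow> complex"
  shows "continuous_map X euclidean f \<Longrightarrow> continuous_map X euclidean (\<lambda>x. cnj (f x))"
  by (simp add: continuous_map_atin tendsto_cnj)

lemma cm_inverse:
  fixes f :: "'a \<Rightarrow> complex"
  shows "\<lbrakk>continuous_map X euclidean f; \<And>x. x \<in> topspace X \<Longrightarrow> f x \<noteq> 0\<rbrakk> \<Longrightarrow> continuous_map X euclidean (\<lambda>x. inverse (f x))"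
  by (simp add: continuous_map_atin tendsto_inverse)

lemma Cb_bound: "g \<in> Cb X \<Longrightarrow> \<exists>M>0. \<forall>x. norm (g x) \<le> M"
proof -
  assume g: "g \<in> Cb X"
  then obtain a where a: "\<forall>x\<in>topspace X. norm (g x) \<le> a"
    unfolding Cb_def bounded_iff by blast
  have "\<forall>x. norm (g x) \<le> max a 1" using a g unfolding Cb_def
    by (metis (mono_tags, lifting) mem_Collect_eq max.coboundedI1 max.coboundedI2 norm_zero zero_le_one)
  then show ?thesis by (metis max.strict_coboundedI2 zero_less_one)
qed

lemma Cb_intro:
  assumes "continuous_map X euclidean g" "\<forall>x. norm (g x) \<le> M" "\<forall>x. x \<notin> topspace X \<longrightarrow> g x = 0"
  shows "g \<in> Cb X"
  unfolding Cb_def using assms by (auto simp: bounded_iff)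

lemma Cb_cont: "g \<in> Cb X \<Longrightarrow> continuous_map X euclidean g" unfolding Cb_def by auto
lemma Cb_out: "g \<in> Cb X \<Longrightarrow> x \<notin> topspace X \<Longrightarrow> g x = 0" unfolding Cb_def by auto

lemma Cb_mult: assumes "g \<in> Cb X" "k \<in> Cb X" shows "(\<lambda>x. g x * k x) \<in> Cb X"
proof -
  obtain M1 where M1: "\<forall>x. norm (g x) \<le> M1" using Cb_bound assms(1) by blast
  obtain M2 where M2: "\<forall>x. norm (k x) \<le> M2" using Cb_bound assms(2) by blast
  have b: "\<forall>x. norm (g x * k x) \<le> M1 * M2"
  proof
    fix x
    have "norm (g x) * norm (k x) \<le> M1 * M2"
      using M1 M2 by (intro mult_mono) (auto intro: order_trans[OF norm_ge_zero])
    then show "norm (g x * k x) \<le> M1 * M2" by (simp add: norm_mult)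
  qed
  show ?thesis
    by (rule Cb_intro[OF cm_mult[OF Cb_cont[OF assms(1)] Cb_cont[OF assms(2)]] b]) (simp add: Cb_out[OF assms(1)])
qed

lemma Cb_add: assumes "g \<in> Cb X" "k \<in> Cb X" shows "(\<lambda>x. g x + k x) \<in> Cb X"
proof -
  obtain M1 where M1: "\<forall>x. norm (g x) \<le> M1" using Cb_bound assms(1) by blast
  obtain M2 where M2: "\<forall>x. norm (k x) \<le> M2" using Cb_bound assms(2) by blast
  have b: "\<forall>x. norm (g x + k x) \<le> M1 + M2"
    using M1 M2 by (metis add_mono norm_triangle_le)
  show ?thesis
    by (rule Cb_intro[OF continuous_map_add[OF Cb_cont[OF assms(1)] Cb_cont[OF assms(2)]] b]) (simp add: Cb_out[OF assms(1)] Cb_out[OF assms(2)])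
qed

lemma Cb_cnj: assumes "g \<in> Cb X" shows "(\<lambda>x. cnj (g x)) \<in> Cb X"
proof -
  obtain M1 where M1: "\<forall>x. norm (g x) \<le> M1" using Cb_bound assms(1) by blast
  then have b: "\<forall>x. norm (cnj (g x)) \<le> M1" by simp
  show ?thesis
    by (rule Cb_intro[OF cm_cnj[OF Cb_cont[OF assms(1)]] b]) (simp add: Cb_out[OF assms(1)])
qed

lemma Cb_const: "(\<lambda>x. if x \<in> topspace X then c else 0) \<in> Cb X"
proof (rule Cb_intro)
  show "continuous_map X euclidean (\<lambda>x. if x \<in> topspace X then c else 0)"
    by (rule continuous_map_eq[of _ _ "\<lambda>x. c"]) simp_all
  show "\<forall>x. norm (if x \<in> topspace X then c else 0) \<le> norm c" by simp
qed simp

lemma Cb_inv: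
  assumes "continuous_map X euclidean q" "d > 0" "\<forall>x\<in>topspace X. norm (q x) \<ge> d"
  shows "(\<lambda>x. if x \<in> topspace X then inverse (q x) else 0) \<in> Cb X"
proof (rule Cb_intro)
  have nz: "\<And>x. x \<in> topspace X \<Longrightarrow> q x \<noteq> 0" using assms by force
  show "continuous_map X euclidean (\<lambda>x. if x \<in> topspace X then inverse (q x) else 0)"
    by (rule continuous_map_eq[OF cm_inverse[OF assms(1) nz]]) auto
  show "\<forall>x. norm (if x \<in> topspace X then inverse (q x) else 0) \<le> inverse d"
    using assms by (auto simp: norm_inverse intro!: le_imp_inverse_le)
qed auto

lemma HX_Cb: "g \<in> HX B X r \<Longrightarrow> g \<in> Cb X" unfolding HX_def by auto

lemma span_mult:
  assumes "p \<in> HX_span B X r" "k \<in> Cb X"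
  shows "(\<lambda>x. p x * k x) \<in> HX_span B X r"
proof -
  obtain n :: nat and g h where gh: "\<forall>i<n. g i \<in> Cb X \<and> h i \<in> C0 B" and p: "p = (\<lambda>x. \<Sum>i<n. g i x * h i (r x))"
    using assms(1) unfolding HX_span_def mem_Collect_eq by blast
  have "\<forall>i<n. (\<lambda>x. g i x * k x) \<in> Cb X \<and> h i \<in> C0 B" using gh assms(2) Cb_mult by blast
  moreover have "(\<lambda>x. p x * k x) = (\<lambda>x. \<Sum>i<n. (g i x * k x) * h i (r x))"
    unfolding p sum_distrib_right by (intro ext sum.cong refl) (simp add: mult_ac)
  ultimately show ?thesis unfolding HX_span_def mem_Collect_eq
    apply (rule_tac x=n in exI)
    apply (rule_tac x="\<lambda>i x. g i x * k x" in exI)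
    apply (rule_tac x=h in exI)
    by simp
qed

lemma span_add:
  assumes "p \<in> HX_span B X r" "q \<in> HX_span B X r"
  shows "(\<lambda>x. p x + q x) \<in> HX_span B X r"
proof -
  obtain n :: nat and g h where gh: "\<forall>i<n. g i \<in> Cb X \<and> h i \<in> C0 B" and p: "p = (\<lambda>x. \<Sum>i<n. g i x * h i (r x))"
    using assms(1) unfolding HX_span_def mem_Collect_eq by blast
  obtain m :: nat and g' h' where gh': "\<forall>i<m. g' i \<in> Cb X \<and> h' i \<in> C0 B" and q: "q = (\<lambda>x. \<Sum>i<m. g' i x * h' i (r x))"
    using assms(2) unfolding HX_span_def mem_Collect_eq by blast
  define G where "G i = (if i < n then g i else g' (i - n))" for i
  define H where "H i = (if i < n then h i else h' (i - n))" for i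
  have "\<forall>i<n+m. G i \<in> Cb X \<and> H i \<in> C0 B" using gh gh' unfolding G_def H_def by auto
  moreover have "(\<lambda>x. p x + q x) = (\<lambda>x. \<Sum>i<n+m. G i x * H i (r x))"
  proof
    fix x
    define f where "f i = G i x * H i (r x)" for i
    have s1: "(\<Sum>i<n+m. f i) = (\<Sum>i<n. f i) + (\<Sum>i=n..<n+m. f i)"
      using sum.atLeastLessThan_concat[of 0 n "n+m" f] by (simp add: atLeast0LessThan)
    have s2: "(\<Sum>i=n..<n+m. f i) = (\<Sum>i<m. f (i+n))"
      using sum.shift_bounds_nat_ivl[of f 0 n m] by (simp add: atLeast0LessThan add.commute)
    have s3: "(\<Sum>i<n. f i) = p x" unfolding p f_def G_def H_def by (intro sum.cong) simp_all
    have s4: "(\<Sum>i<m. f (i+n)) = q x" unfolding q f_def G_def H_def by (intro sum.cong) simp_all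
    show "p x + q x = (\<Sum>i<n+m. G i x * H i (r x))" using s1 s2 s3 s4 unfolding f_def by simp
  qed
  ultimately show ?thesis unfolding HX_span_def mem_Collect_eq
    by (intro exI[of _ "n+m"] exI[of _ G] exI[of _ H] conjI)
qed

lemma HX_approx: "g \<in> HX B X r \<Longrightarrow> e > 0 \<Longrightarrow> \<exists>p\<in>HX_span B X r. \<forall>x\<in>topspace X. norm (g x - p x) < e"
  unfolding HX_def by blast

lemma HX_mult_Cb:
  assumes g: "g \<in> HX B X r" and k: "k \<in> Cb X"
  shows "(\<lambda>x. g x * k x) \<in> HX B X r"
proof -
  obtain M where M: "M > 0" "\<forall>x. norm (k x) \<le> M" using Cb_bound k by blast
  have "(\<lambda>x. g x * k x) \<in> Cb X" using Cb_mult HX_Cb g k by blast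
  moreover have "\<exists>p\<in>HX_span B X r. \<forall>x\<in>topspace X. norm (g x * k x - p x) < e" if e: "e > 0" for e
  proof -
    obtain p where p: "p \<in> HX_span B X r" "\<forall>x\<in>topspace X. norm (g x - p x) < e / M"
      using HX_approx[OF g, of "e/M"] e M by auto
    have "\<forall>x\<in>topspace X. norm (g x * k x - p x * k x) < e"
    proof
      fix x assume x: "x \<in> topspace X"
      have "norm (g x * k x - p x * k x) = norm (g x - p x) * norm (k x)"
        by (metis left_diff_distrib norm_mult)
      also have "\<dots> \<le> norm (g x - p x) * M" using M by (simp add: mult_left_mono)
      also have "\<dots> < (e / M) * M" using p x M by (intro mult_strict_right_mono) auto
      finally show "norm (g x * k x - p x * k x) < e" using M by simp
    qed
    then show ?thesis using span_mult[OF p(1) k] by (intro bexI[of _ "\<lambda>x. p x * k x"]) auto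
  qed
  ultimately show ?thesis unfolding HX_def by blast
qed

lemma HX_add:
  assumes g: "g \<in> HX B X r" and k: "k \<in> HX B X r"
  shows "(\<lambda>x. g x + k x) \<in> HX B X r"
proof -
  have "(\<lambda>x. g x + k x) \<in> Cb X" using Cb_add HX_Cb g k by blast
  moreover have "\<exists>p\<in>HX_span B X r. \<forall>x\<in>topspace X. norm (g x + k x - p x) < e" if e: "e > 0" for e
  proof -
    obtain p where p: "p \<in> HX_span B X r" "\<forall>x\<in>topspace X. norm (g x - p x) < e / 2"
      using HX_approx[OF g, of "e/2"] e by auto
    obtain q where q: "q \<in> HX_span B X r" "\<forall>x\<in>topspace X. norm (k x - q x) < e / 2"
      using HX_approx[OF k, of "e/2"] e by auto
    have "\<forall>x\<in>topspace X. norm (g x + k x - (p x + q x)) < e"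
    proof
      fix x assume x: "x \<in> topspace X"
      have "norm (g x + k x - (p x + q x)) \<le> norm (g x - p x) + norm (k x - q x)"
        by (metis add_diff_add norm_triangle_ineq)
      moreover have "norm (g x - p x) < e/2" "norm (k x - q x) < e/2" using p q x by auto
      ultimately show "norm (g x + k x - (p x + q x)) < e" by linarith
    qed
    then show ?thesis using span_add[OF p(1) q(1)] by (intro bexI[of _ "\<lambda>x. p x + q x"]) auto
  qed
  ultimately show ?thesis unfolding HX_def by blast
qed

lemma HX_scale:
  assumes g: "g \<in> HX B X r"
  shows "(\<lambda>x. c * g x) \<in> HX B X r"
proof -
  have "(\<lambda>x. c * g x) = (\<lambda>x. g x * (if x \<in> topspace X then c else 0))"
    using Cb_out[OF HX_Cb[OF g]] by auto
  then show ?thesis using HX_mult_Cb[OF g Cb_const] by simp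
qed

lemma HX_mult:
  assumes g: "g \<in> HX B X r" and k: "k \<in> HX B X r"
  shows "(\<lambda>x. g x * k x) \<in> HX B X r"
  using HX_mult_Cb[OF g HX_Cb[OF k]] .

lemma char_zero:
  assumes phi: "\<phi> \<in> characters (HX B X r)"
  shows "\<phi> (\<lambda>x. 0) = 0"
proof -
  obtain g where g: "g \<in> HX B X r" using phi unfolding characters_def by auto
  have "\<phi> (\<lambda>x. 0 * g x) = 0 * \<phi> g" using phi g unfolding characters_def by blast
  then show ?thesis by simp
qed

lemma char_ideal:
  assumes phi: "\<phi> \<in> characters (HX B X r)" and a: "a \<in> HX B X r" "\<phi> a = 0" and k: "k \<in> Cb X"
  shows "\<phi> (\<lambda>x. a x * k x) = 0"
proof -
  obtain g0 where g0: "g0 \<in> HX B X r" "\<phi> g0 \<noteq> 0" using phi unfolding characters_def by auto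
  have mu: "\<forall>g\<in>HX B X r. \<forall>h\<in>HX B X r. \<phi> (\<lambda>x. g x * h x) = \<phi> g * \<phi> h"
    using phi unfolding characters_def by blast
  have ak: "(\<lambda>x. a x * k x) \<in> HX B X r" using HX_mult_Cb a k by blast
  have gk: "(\<lambda>x. g0 x * k x) \<in> HX B X r" using HX_mult_Cb g0 k by blast
  have "\<phi> (\<lambda>x. a x * k x) * \<phi> g0 = \<phi> (\<lambda>x. a x * k x * g0 x)" using mu ak g0 by simp
  also have "(\<lambda>x. a x * k x * g0 x) = (\<lambda>x. a x * (g0 x * k x))" by (simp add: mult_ac)
  also have "\<phi> \<dots> = 0" using mu a gk by simp
  finally show ?thesis using g0 by simp
qed

lemma char_sum:
  assumes phi: "\<phi> \<in> characters (HX B X r)" and K: "finite K"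
  shows "(\<forall>k\<in>K. b k \<in> HX B X r \<and> \<phi> (b k) = 0) \<Longrightarrow>
         (\<lambda>x. \<Sum>k\<in>K. b k x) \<in> HX B X r \<and> \<phi> (\<lambda>x. \<Sum>k\<in>K. b k x) = 0"
  using K
proof (induction K rule: finite_induct)
  case empty
  obtain g where g: "g \<in> HX B X r" using phi unfolding characters_def by auto
  have "(\<lambda>x. 0 * g x) \<in> HX B X r" using HX_scale g by blast
  then show ?case using char_zero[OF phi] by simp
next
  case (insert k K)
  have add: "\<forall>g\<in>HX B X r. \<forall>h\<in>HX B X r. \<phi> (\<lambda>x. g x + h x) = \<phi> g + \<phi> h"
    using phi unfolding characters_def by blast
  have IH: "(\<lambda>x. \<Sum>k\<in>K. b k x) \<in> HX B X r \<and> \<phi> (\<lambda>x. \<Sum>k\<in>K. b k x) = 0" using insert by auto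
  have bk: "b k \<in> HX B X r" "\<phi> (b k) = 0" using insert by auto
  have "(\<lambda>x. b k x + (\<lambda>x. \<Sum>k\<in>K. b k x) x) \<in> HX B X r" using HX_add[OF bk(1) IH[THEN conjunct1]] .
  moreover have "\<phi> (\<lambda>x. b k x + (\<lambda>x. \<Sum>k\<in>K. b k x) x) = 0"
    using add bk IH by (metis add_0)
  ultimately show ?case using insert by simp
qed

lemma beta_i_char:
  assumes x: "x \<in> topspace X" and g: "g \<in> HX B X r" "g x \<noteq> 0"
  shows "beta_i B X r x \<in> characters (HX B X r)"
  unfolding characters_def beta_i_def using g
  by (auto simp: HX_add HX_scale HX_mult)

lemma density:
  assumes phi: "\<phi> \<in> characters (HX B X r)" and F: "finite F" "F \<subseteq> HX B X r" and eps: "\<epsilon> > 0"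
  shows "\<exists>x\<in>topspace X. (\<forall>g\<in>F. norm (g x - \<phi> g) < \<epsilon>) \<and> beta_i B X r x \<in> characters (HX B X r)"
proof -
  let ?H = "HX B X r"
  have add: "\<forall>g\<in>?H. \<forall>h\<in>?H. \<phi> (\<lambda>x. g x + h x) = \<phi> g + \<phi> h"
    and sc: "\<forall>g\<in>?H. \<forall>c. \<phi> (\<lambda>x. c * g x) = c * \<phi> g"
    and mu: "\<forall>g\<in>?H. \<forall>h\<in>?H. \<phi> (\<lambda>x. g x * h x) = \<phi> g * \<phi> h"
    using phi unfolding characters_def by auto
  obtain g1 where g1: "g1 \<in> ?H" "\<phi> g1 \<noteq> 0" using phi unfolding characters_def by auto
  define g0 where "g0 = (\<lambda>x. inverse (\<phi> g1) * g1 x)"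
  have g0H: "g0 \<in> ?H" unfolding g0_def by (rule HX_scale[OF g1(1)])
  have g0phi: "\<phi> g0 = 1" unfolding g0_def using sc g1 by simp
  obtain M where M: "M > 0" "\<forall>x. norm (g0 x) \<le> M" using Cb_bound HX_Cb g0H by blast
  define K where "K = insert g0 F"
  have K: "finite K" "K \<subseteq> ?H" using F g0H unfolding K_def by auto
  define a where "a g = (\<lambda>x. g0 x * g x + (- \<phi> g) * g0 x)" for g
  have aH: "a g \<in> ?H" and aphi: "\<phi> (a g) = 0" if "g \<in> ?H" for g
  proof -
    have 1: "(\<lambda>x. g0 x * g x) \<in> ?H" using HX_mult g0H that by blast
    have 2: "(\<lambda>x. (- \<phi> g) * g0 x) \<in> ?H" using HX_scale g0H by blast
    show "a g \<in> ?H" unfolding a_def using HX_add[OF 1 2] by simp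
    have "\<phi> (a g) = \<phi> (\<lambda>x. g0 x * g x) + \<phi> (\<lambda>x. (- \<phi> g) * g0 x)" unfolding a_def using add 1 2 by auto
    also have "\<dots> = 0"
    proof -
      have m1: "\<phi> (\<lambda>x. g0 x * g x) = \<phi> g0 * \<phi> g" using mu g0H that by blast
      have m2: "\<phi> (\<lambda>x. (- \<phi> g) * g0 x) = (- \<phi> g) * \<phi> g0" using sc g0H by blast
      show ?thesis unfolding m1 m2 g0phi by simp
    qed
    finally show "\<phi> (a g) = 0" .
  qed
  define t where "t = (\<lambda>x. \<Sum>g\<in>K. a g x * cnj (a g x))"
  have "\<forall>g\<in>K. (\<lambda>x. a g x * cnj (a g x)) \<in> ?H \<and> \<phi> (\<lambda>x. a g x * cnj (a g x)) = 0"
  proof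
    fix g assume "g \<in> K"
    then have gH: "g \<in> ?H" using K by auto
    have c: "(\<lambda>x. cnj (a g x)) \<in> Cb X" using Cb_cnj HX_Cb aH[OF gH] by blast
    show "(\<lambda>x. a g x * cnj (a g x)) \<in> ?H \<and> \<phi> (\<lambda>x. a g x * cnj (a g x)) = 0"
      using HX_mult_Cb[OF aH[OF gH] c] char_ideal[OF phi aH[OF gH] aphi[OF gH] c] by simp
  qed
  then have tH: "t \<in> ?H" and tphi: "\<phi> t = 0"
    using char_sum[OF phi K(1), of "\<lambda>g x. a g x * cnj (a g x)"] unfolding t_def by auto
  define tr where "tr x = (\<Sum>g\<in>K. (norm (a g x))^2)" for x
  have t_tr: "t x = complex_of_real (tr x)" for x
    unfolding t_def tr_def of_real_sum by (simp only: complex_norm_square)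
  have tr0: "tr x \<ge> 0" for x by (simp add: tr_def sum_nonneg)
  have a_le: "(norm (a g x))^2 \<le> tr x" if "g \<in> K" for g x
    unfolding tr_def using K(1) that by (intro member_le_sum) auto
  define N where "N = 8 * M / \<epsilon>^2 + 1"
  have N: "N > 0" using M eps unfolding N_def by (simp add: add_pos_nonneg)
  have normq: "norm (1 + of_real N * t x) = 1 + N * tr x" for x
  proof -
    have "1 + of_real N * t x = complex_of_real (1 + N * tr x)" by (simp add: t_tr)
    then have "norm (1 + of_real N * t x) = norm (complex_of_real (1 + N * tr x))" by (simp only:)
    also have "\<dots> = 1 + N * tr x" using N tr0[of x] by (simp only: norm_of_real) simp
    finally show ?thesis .
  qed
  have tcont: "continuous_map X euclidean t" using Cb_cont HX_Cb tH by blast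
  define k where "k = (\<lambda>x. if x \<in> topspace X then inverse (1 + of_real N * t x) else 0)"
  have kCb: "k \<in> Cb X" unfolding k_def
  proof (rule Cb_inv[where d=1])
    show "continuous_map X euclidean (\<lambda>x. 1 + complex_of_real N * t x)"
      by (intro continuous_map_add cm_mult tcont continuous_map_const[THEN iffD2]) auto
    show "\<forall>x\<in>topspace X. 1 \<le> cmod (1 + complex_of_real N * t x)"
      using normq N tr0 by simp
  qed simp
  define e where "e = (\<lambda>x. g0 x * k x)"
  have eH: "e \<in> ?H" unfolding e_def using HX_mult_Cb g0H kCb by blast
  have etH: "(\<lambda>x. e x * t x) \<in> ?H" using HX_mult eH tH by blast
  have etphi: "\<phi> (\<lambda>x. e x * t x) = 0" using mu eH tH tphi by simp
  have NetH: "(\<lambda>x. of_real N * (e x * t x)) \<in> ?H" using HX_scale etH by blast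
  have Netphi: "\<phi> (\<lambda>x. of_real N * (e x * t x)) = 0" using sc etH etphi by simp
  have g0eq: "g0 = (\<lambda>x. e x + of_real N * (e x * t x))"
  proof
    fix x show "g0 x = e x + of_real N * (e x * t x)"
    proof (cases "x \<in> topspace X")
      case True
      have p: "0 < 1 + N * tr x" using N tr0[of x] by (simp add: add_pos_nonneg)
      have nz: "1 + of_real N * t x \<noteq> 0"
      proof
        assume "1 + of_real N * t x = 0"
        then have "norm (1 + of_real N * t x) = 0" by simp
        then show False using normq[of x] p by simp
      qed
      have "e x + of_real N * (e x * t x) = g0 x * inverse (1 + of_real N * t x) * (1 + of_real N * t x)"
        unfolding e_def k_def using True by (simp add: algebra_simps)
      then show ?thesis using nz by simp
    next
      case False
      then show ?thesis unfolding e_def using Cb_out[OF HX_Cb[OF g0H] False] by simp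
    qed
  qed
  have ephi: "\<phi> e = 1"
  proof -
    have "\<phi> g0 = \<phi> e + \<phi> (\<lambda>x. of_real N * (e x * t x))"
      using add eH NetH by (subst g0eq) auto
    then show ?thesis using g0phi Netphi by simp
  qed
  have "\<exists>x\<in>topspace X. norm (e x - 1) < 1/2"
  proof (rule ccontr)
    assume "\<not> ?thesis"
    then have far: "\<forall>x\<in>topspace X. norm (e x - 1) \<ge> 1/2" by auto
    define k2 where "k2 = (\<lambda>x. if x\<in>topspace X then inverse (e x - 1) else 0)"
    have k2: "k2 \<in> Cb X" unfolding k2_def
      by (rule Cb_inv[where d="1/2"]) (use far Cb_cont[OF HX_Cb[OF eH]] in \<open>auto intro!: continuous_map_diff\<close>)
    define u where "u = (\<lambda>x. e x * k2 x)"
    have uH: "u \<in> ?H" unfolding u_def using HX_mult_Cb eH k2 by blast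
    have ueH: "(\<lambda>x. u x * e x) \<in> ?H" using HX_mult uH eH by blast
    have muH: "(\<lambda>x. (-1) * u x) \<in> ?H" using HX_scale uH by blast
    have eeq: "e = (\<lambda>x. u x * e x + (-1) * u x)"
    proof
      fix x show "e x = u x * e x + (-1) * u x"
      proof (cases "x \<in> topspace X")
        case True
        have nz: "e x - 1 \<noteq> 0" using far True by force
        have "u x * e x + (-1) * u x = e x * inverse (e x - 1) * (e x - 1)"
          unfolding u_def k2_def using True by (simp add: algebra_simps)
        then show ?thesis using nz by simp
      next
        case False
        then show ?thesis unfolding u_def k2_def using Cb_out[OF HX_Cb[OF eH] False] by simp
      qed
    qed
    have "\<phi> e = \<phi> (\<lambda>x. u x * e x) + \<phi> (\<lambda>x. (-1) * u x)"
      using add ueH muH by (subst eeq) auto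
    also have "\<dots> = 0"
    proof -
      have m1: "\<phi> (\<lambda>x. u x * e x) = \<phi> u * \<phi> e" using mu uH eH by blast
      have m2: "\<phi> (\<lambda>x. (-1) * u x) = (-1) * \<phi> u" using sc uH by blast
      show ?thesis unfolding m1 m2 ephi by simp
    qed
    finally show False using ephi by simp
  qed
  then obtain x where x: "x \<in> topspace X" "norm (e x - 1) < 1/2" by blast
  have ex: "norm (e x) > 1/2"
    using x(2) norm_triangle_ineq2[of 1 "e x"] by (simp add: norm_minus_commute)
  have ng0: "norm (g0 x) = norm (e x) * (1 + N * tr x)"
  proof -
    have "g0 x = e x * (1 + of_real N * t x)" by (subst g0eq) (simp add: algebra_simps)
    then show ?thesis by (simp only: norm_mult normq)
  qed
  have g0big: "norm (g0 x) > 1/2"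
  proof -
    have "1 \<le> 1 + N * tr x" using N tr0[of x] by simp
    then have "norm (e x) \<le> norm (g0 x)" using ng0 by (simp add: mult_le_cancel_left1)
    then show ?thesis using ex by simp
  qed
  have trsmall: "N * tr x < 2 * M"
  proof -
    have "(1/2) * (1 + N * tr x) < norm (e x) * (1 + N * tr x)"
      using ex N tr0[of x] by (intro mult_strict_right_mono) (auto intro: add_pos_nonneg)
    then have "(1/2) * (1 + N * tr x) < M" using ng0 M(2)[rule_format, of x] by linarith
    then show ?thesis by simp
  qed
  have close: "norm (g x - \<phi> g) < \<epsilon>" if gK: "g \<in> K" for g
  proof -
    define n2 where "n2 = (norm (g x - \<phi> g))^2"
    have "a g x = g0 x * (g x - \<phi> g)" unfolding a_def by (simp add: algebra_simps)
    then have "(norm (a g x))^2 = (norm (g0 x))^2 * n2" unfolding n2_def by (simp add: norm_mult power_mult_distrib)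
    moreover have "(1/2)^2 \<le> (norm (g0 x))^2" using g0big by (intro power_mono) auto
    moreover have n20: "n2 \<ge> 0" unfolding n2_def by simp
    ultimately have "(1/2)^2 * n2 \<le> (norm (a g x))^2" by (simp add: mult_right_mono)
    then have "(1/4) * n2 \<le> tr x" using a_le[OF gK, of x] by (simp add: power2_eq_square)
    then have "N * ((1/4) * n2) \<le> N * tr x" using N by (simp add: mult_left_mono)
    then have "N * n2 < 8 * M" using trsmall by linarith
    moreover have "N * \<epsilon>^2 = 8 * M + \<epsilon>^2" unfolding N_def using eps by (simp add: field_simps)
    moreover have "\<epsilon>^2 > 0" using eps by simp
    ultimately have "N * n2 < N * \<epsilon>^2" by linarith
    then have "n2 < \<epsilon>^2" using N by simp
    then show ?thesis unfolding n2_def using eps by (meson less_le power_less_imp_less_base)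
  qed
  have "g0 x \<noteq> 0" using g0big by auto
  then have "beta_i B X r x \<in> characters ?H" using beta_i_char[OF x(1) g0H] by blast
  then show ?thesis using x(1) close K_def by blast
qed

theorem proposition4p10:
  fixes B :: "'b topology" and X :: "'a topology" and X' :: "'c topology"
    and r :: "'a \<Rightarrow> 'b" and r' :: "'c \<Rightarrow> 'b" and f :: "'a \<Rightarrow> 'c"
    and f' :: "(('a \<Rightarrow> complex) \<Rightarrow> complex) \<Rightarrow> 'c"
    and betar :: "(('a \<Rightarrow> complex) \<Rightarrow> complex) \<Rightarrow> 'b"
  assumes "locally_compact_space B" and "Hausdorff_space B"
    and "continuous_map X B r"
    and "continuous_map X' B r'" and "Hausdorff_space X'" and "proper_map X' B r'"
    and "continuous_map X X' f" and "\<forall>x\<in>topspace X. r' (f x) = r x"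
    and "continuous_map (betaB B X r) X' f'"
    and "\<forall>x\<in>topspace X. f' (beta_i B X r x) = f x"
    and "continuous_map (betaB B X r) B betar"
    and "\<forall>x\<in>topspace X. betar (beta_i B X r x) = r x"
  shows "\<forall>\<phi>\<in>topspace (betaB B X r). r' (f' \<phi>) = betar \<phi>"
proof (intro ballI, rule ccontr)
  let ?H = "HX B X r"
  fix \<phi> assume phi: "\<phi> \<in> topspace (betaB B X r)" and ne: "r' (f' \<phi>) \<noteq> betar \<phi>"
  have c1: "continuous_map (betaB B X r) B (r' \<circ> f')" using continuous_map_compose assms(9) assms(4) by blast
  have b1: "r' (f' \<phi>) \<in> topspace B" using c1 phi by (metis comp_apply continuous_map_image_subset_topspace image_subset_iff)
  have b2: "betar \<phi> \<in> topspace B" using assms(11) phi by (metis continuous_map_image_subset_topspace image_subset_iff)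
  obtain U1 U2 where U: "openin B U1" "openin B U2" "r' (f' \<phi>) \<in> U1" "betar \<phi> \<in> U2" "disjnt U1 U2"
    using assms(2) b1 b2 ne unfolding Hausdorff_space_def by blast
  define S where "S = {\<psi> \<in> topspace (betaB B X r). (r' \<circ> f') \<psi> \<in> U1} \<inter> {\<psi> \<in> topspace (betaB B X r). betar \<psi> \<in> U2}"
  have So: "openin (betaB B X r) S" unfolding S_def
    using openin_continuous_map_preimage[OF c1 U(1)] openin_continuous_map_preimage[OF assms(11) U(2)] by blast
  have phiS: "\<phi> \<in> S" unfolding S_def using phi U by auto
  obtain T where T: "openin (product_topology (\<lambda>_. euclidean) ?H) T" "S = T \<inter> characters ?H"
    using So unfolding betaB_def openin_subtopology by blast
  have phiT: "\<phi> \<in> T" and phiC: "\<phi> \<in> characters ?H" using phiS T by auto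
  obtain U where Uf: "finite {g \<in> ?H. U g \<noteq> UNIV}" and Uo: "\<forall>g\<in>?H. open (U g)"
      and phiU: "\<phi> \<in> Pi\<^sub>E ?H U" and UT: "Pi\<^sub>E ?H U \<subseteq> T"
    using T(1) phiT unfolding openin_product_topology_alt by auto
  define F where "F = {g \<in> ?H. U g \<noteq> UNIV}"
  have "\<forall>g\<in>F. \<exists>d>0. ball (\<phi> g) d \<subseteq> U g"
  proof
    fix g assume "g \<in> F"
    then have "g \<in> ?H" unfolding F_def by auto
    then have "open (U g)" "\<phi> g \<in> U g" using Uo phiU by (auto simp: PiE_iff)
    then show "\<exists>d>0. ball (\<phi> g) d \<subseteq> U g" using open_contains_ball by blast
  qed
  then obtain rad where rad: "\<forall>g\<in>F. rad g > 0 \<and> ball (\<phi> g) (rad g) \<subseteq> U g" by metis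
  define \<epsilon> where "\<epsilon> = Min (insert 1 (rad ` F))"
  have Ff: "finite F" using Uf unfolding F_def .
  have eps: "\<epsilon> > 0" unfolding \<epsilon>_def using Ff rad by (subst Min_gr_iff) auto
  have epsle: "\<epsilon> \<le> rad g" if "g \<in> F" for g unfolding \<epsilon>_def using Ff that by (intro Min_le) auto
  obtain x where x: "x \<in> topspace X" "\<forall>g\<in>F. norm (g x - \<phi> g) < \<epsilon>" "beta_i B X r x \<in> characters ?H"
    using density[OF phiC Ff _ eps] unfolding F_def by blast
  have "beta_i B X r x \<in> Pi\<^sub>E ?H U"
  proof (unfold PiE_iff, intro conjI ballI)
    fix g assume g: "g \<in> ?H"
    show "beta_i B X r x g \<in> U g"
    proof (cases "g \<in> F")
      case True
      have "norm (g x - \<phi> g) < \<epsilon>" using x(2) True by blast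
      then have "dist (\<phi> g) (g x) < rad g" using epsle[OF True] by (simp add: dist_norm norm_minus_commute)
      then have "g x \<in> ball (\<phi> g) (rad g)" by simp
      then have "g x \<in> U g" using rad True by blast
      then show ?thesis using g unfolding beta_i_def by simp
    next
      case False
      then show ?thesis using g unfolding F_def by simp
    qed
  next
    show "beta_i B X r x \<in> extensional ?H" unfolding beta_i_def by simp
  qed
  then have "beta_i B X r x \<in> S" using UT T(2) x(3) by auto
  then have "r' (f' (beta_i B X r x)) \<in> U1" "betar (beta_i B X r x) \<in> U2" unfolding S_def by auto
  then have "r x \<in> U1" "r x \<in> U2" using assms(8) assms(10) assms(12) x(1) by auto
  then show False using U(5) by (auto simp: disjnt_def)
qed

end
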